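(* Let $W$ be a graded CLSAS on $\mathcal{W}$, regarded as a $\mathcal{W}$-module via left multiplication. Then $W$ is not isomorphic to $A_\gamma$ for any $\gamma\in\mathbb{C}$.
   Context: $G$ is a free (additive) subgroup of $\mathbb{C}$ of rank $\nu>1$. The high rank Witt algebra $\mathcal{W}$ has basis $\{L_a\mid a\in G\}$ and bracket $[L_a,L_b]=(b-a)L_{a+b}$. A left-symmetric algebra is a complex vector space with bilinear product satisfying $(xy)z-x(yz)=(yx)z-y(xz)$; a compatible left-symmetric algebraic structure (CLSAS) on a Lie algebra $\mathfrak g$ is such a product on $\mathfrak g$ with $xy-yx=[x,y]$. A CLSAS on $\mathcal{W}$ is graded if $L_aL_b=f(a,b)L_{a+b}$ for some function $f:G\times G\to\mathbb{C}$. The $\mathcal{W}$-module $A_\gamma$ ($\gamma\in\mathbb{C}$) has basis $\{v_b\mid b\in G\}$ and action $L_av_b=(a+b)v_{a+b}$ if $b\neq0$, $L_av_0=a(\gamma+a)v_a$. *)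

theory Defs
  imports Main Complex_Main
begin

definition int_comb :: "complex set \<Rightarrow> complex set" where
  "int_comb B = {(\<Sum>b\<in>S. of_int (c b) * b) | S c. finite S \<and> S \<subseteq> B}"

definition int_indep :: "complex set \<Rightarrow> bool" where
  "int_indep B \<longleftrightarrow> (\<forall>S c. finite S \<and> S \<subseteq> B \<and> (\<Sum>b\<in>S. of_int (c b) * b) = 0
                         \<longrightarrow> (\<forall>b\<in>S. c b = (0::int)))"

definition free_subgroup_rank_gt1 :: "complex set \<Rightarrow> bool" where
  "free_subgroup_rank_gt1 G \<longleftrightarrow>
     0 \<in> G \<and> (\<forall>x\<in>G. \<forall>y\<in>G. x + y \<in> G \<and> - x \<in> G) \<and>
     (\<exists>B. B \<subseteq> G \<and> int_indep B \<and> int_comb B = G \<and> (\<exists>b1\<in>B. \<exists>b2\<in>B. b1 \<noteq> b2))"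

text \<open>The underlying space: finitely supported complex functions on G
  (coefficients with respect to the basis {L_a} resp. {v_b}).\<close>

definition supp :: "(complex \<Rightarrow> complex) \<Rightarrow> complex set" where
  "supp v = {x. v x \<noteq> 0}"

definition Vsp :: "complex set \<Rightarrow> (complex \<Rightarrow> complex) set" where
  "Vsp G = {v. finite (supp v) \<and> supp v \<subseteq> G}"

text \<open>Bilinear product on the Witt algebra given by structure function f:
  L_a L_b = f a b L_{a+b}.\<close>

definition gmult :: "(complex \<Rightarrow> complex \<Rightarrow> complex) \<Rightarrow>
    (complex \<Rightarrow> complex) \<Rightarrow> (complex \<Rightarrow> complex) \<Rightarrow> (complex \<Rightarrow> complex)" where
  "gmult f x y = (\<lambda>c. \<Sum>a\<in>supp x. f a (c - a) * x a * y (c - a))"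

definition witt_bracket :: "(complex \<Rightarrow> complex) \<Rightarrow> (complex \<Rightarrow> complex) \<Rightarrow> (complex \<Rightarrow> complex)" where
  "witt_bracket x y = gmult (\<lambda>a b. b - a) x y"

definition graded_CLSAS :: "complex set \<Rightarrow> (complex \<Rightarrow> complex \<Rightarrow> complex) \<Rightarrow> bool" where
  "graded_CLSAS G f \<longleftrightarrow>
     (\<forall>x\<in>Vsp G. \<forall>y\<in>Vsp G. \<forall>z\<in>Vsp G.
        (\<lambda>c. gmult f (gmult f x y) z c - gmult f x (gmult f y z) c)
      = (\<lambda>c. gmult f (gmult f y x) z c - gmult f y (gmult f x z) c)) \<and>
     (\<forall>x\<in>Vsp G. \<forall>y\<in>Vsp G.
        (\<lambda>c. gmult f x y c - gmult f y x c) = witt_bracket x y)"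

text \<open>The W-module A_gamma: L_a v_b = (a+b) v_{a+b} (b \<noteq> 0), L_a v_0 = a(gamma+a) v_a,
  extended bilinearly.\<close>

definition A_act :: "complex \<Rightarrow> (complex \<Rightarrow> complex) \<Rightarrow> (complex \<Rightarrow> complex) \<Rightarrow> (complex \<Rightarrow> complex)" where
  "A_act \<gamma> x v = (\<lambda>c. \<Sum>a\<in>supp x. x a *
       (if c = a then a * (\<gamma> + a) * v 0 else c * v (c - a)))"

definition module_iso_W_A ::
  "complex set \<Rightarrow> (complex \<Rightarrow> complex \<Rightarrow> complex) \<Rightarrow> complex \<Rightarrow>
   ((complex \<Rightarrow> complex) \<Rightarrow> (complex \<Rightarrow> complex)) \<Rightarrow> bool" where
  "module_iso_W_A G f \<gamma> \<phi> \<longleftrightarrow>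
     bij_betw \<phi> (Vsp G) (Vsp G) \<and>
     (\<forall>u\<in>Vsp G. \<forall>v\<in>Vsp G. \<phi> (\<lambda>c. u c + v c) = (\<lambda>c. \<phi> u c + \<phi> v c)) \<and>
     (\<forall>k. \<forall>v\<in>Vsp G. \<phi> (\<lambda>c. k * v c) = (\<lambda>c. k * \<phi> v c)) \<and>
     (\<forall>x\<in>Vsp G. \<forall>v\<in>Vsp G. \<phi> (gmult f x v) = A_act \<gamma> x (\<phi> v))"

end

theory Submission
  imports Defs
begin

definition dl :: "complex \<Rightarrow> complex \<Rightarrow> complex" where
  "dl b = (\<lambda>c. if c = b then 1 else 0)"

lemma supp_dl: "supp (dl a) = {a}"
  by (auto simp: supp_def dl_def)

lemma dl_Vsp: "a \<in> G \<Longrightarrow> dl a \<in> Vsp G"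
  by (simp add: Vsp_def supp_dl)

lemma gmult_dl: "gmult f (dl a) (dl b) = (\<lambda>c. f a b * dl (a+b) c)"
  unfolding gmult_def supp_dl by (auto simp: dl_def fun_eq_iff algebra_simps)

lemma scal_Vsp: "a \<in> G \<Longrightarrow> (\<lambda>c. k * dl a c) \<in> Vsp G"
  by (auto simp: Vsp_def supp_def dl_def intro: finite_subset[of _ "{a}"])

lemma A_act0: "A_act \<gamma> x v 0 = 0"
  unfolding A_act_def by (rule sum.neutral) auto

lemma key:
  assumes G: "\<forall>x\<in>G. \<forall>y\<in>G. x + y \<in> G \<and> - x \<in> G"
    and comm: "\<forall>x\<in>Vsp G. \<forall>y\<in>Vsp G. (\<lambda>c. gmult f x y c - gmult f y x c) = witt_bracket x y"
    and add: "\<forall>u\<in>Vsp G. \<forall>v\<in>Vsp G. \<phi> (\<lambda>c. u c + v c) = (\<lambda>c. \<phi> u c + \<phi> v c)"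
    and sc: "\<forall>k. \<forall>v\<in>Vsp G. \<phi> (\<lambda>c. k * v c) = (\<lambda>c. k * \<phi> v c)"
    and hom: "\<forall>x\<in>Vsp G. \<forall>v\<in>Vsp G. \<phi> (gmult f x v) = A_act \<gamma> x (\<phi> v)"
    and a: "a \<in> G" and b: "b \<in> G"
  shows "(b - a) * \<phi> (dl (a+b)) 0 = 0"
proof -
  have ab: "a + b \<in> G" using G a b by auto
  have wb: "witt_bracket (dl a) (dl b) = (\<lambda>c. (b - a) * dl (a+b) c)"
    unfolding witt_bracket_def gmult_dl by simp
  define P where "P = gmult f (dl a) (dl b)"
  define Q where "Q = gmult f (dl b) (dl a)"
  have P: "P \<in> Vsp G" unfolding P_def gmult_dl using scal_Vsp[OF ab] by simp
  have Q: "Q \<in> Vsp G" unfolding Q_def gmult_dl using scal_Vsp[of "b+a"] G a b by auto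
  have mQ: "(\<lambda>c. (-1) * Q c) \<in> Vsp G" using Q by (auto simp: Vsp_def supp_def)
  have e: "(\<lambda>c. (b - a) * dl (a+b) c) = (\<lambda>c. P c + (\<lambda>c. (-1) * Q c) c)"
    using comm dl_Vsp[OF a] dl_Vsp[OF b] wb unfolding P_def Q_def
    by (metis (no_types, lifting) ext diff_conv_add_uminus mult_minus1)
  have "\<phi> (\<lambda>c. (b - a) * dl (a+b) c) 0 = \<phi> P 0 + (-1) * \<phi> Q 0"
    unfolding e by (subst add[rule_format, OF P mQ], subst sc[rule_format, OF Q], simp)
  also have "\<phi> P 0 = 0" unfolding P_def using hom dl_Vsp[OF a] dl_Vsp[OF b] A_act0 by simp
  also have "\<phi> Q 0 = 0" unfolding Q_def using hom dl_Vsp[OF a] dl_Vsp[OF b] A_act0 by simp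
  finally show ?thesis using sc dl_Vsp[OF ab] by simp
qed

theorem theorem3p3:
  fixes G :: "complex set" and f :: "complex \<Rightarrow> complex \<Rightarrow> complex"
  assumes "free_subgroup_rank_gt1 G"
    and "graded_CLSAS G f"
  shows "\<not> (\<exists>\<gamma> \<phi>. module_iso_W_A G f \<gamma> \<phi>)"
proof
  assume "\<exists>\<gamma> \<phi>. module_iso_W_A G f \<gamma> \<phi>"
  then obtain \<gamma> \<phi> where iso: "module_iso_W_A G f \<gamma> \<phi>" by blast
  have G0: "0 \<in> G" and G: "\<forall>x\<in>G. \<forall>y\<in>G. x + y \<in> G \<and> - x \<in> G"
    using assms(1) by (auto simp: free_subgroup_rank_gt1_def)
  obtain a0 where a0: "a0 \<in> G" "a0 \<noteq> 0"
    using assms(1) unfolding free_subgroup_rank_gt1_def by blast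
  have comm: "\<forall>x\<in>Vsp G. \<forall>y\<in>Vsp G. (\<lambda>c. gmult f x y c - gmult f y x c) = witt_bracket x y"
    using assms(2) by (simp add: graded_CLSAS_def)
  have bij: "bij_betw \<phi> (Vsp G) (Vsp G)"
    and add: "\<forall>u\<in>Vsp G. \<forall>v\<in>Vsp G. \<phi> (\<lambda>c. u c + v c) = (\<lambda>c. \<phi> u c + \<phi> v c)"
    and sc: "\<forall>k. \<forall>v\<in>Vsp G. \<phi> (\<lambda>c. k * v c) = (\<lambda>c. k * \<phi> v c)"
    and hom: "\<forall>x\<in>Vsp G. \<forall>v\<in>Vsp G. \<phi> (gmult f x v) = A_act \<gamma> x (\<phi> v)"
    using iso by (auto simp: module_iso_W_A_def)
  note K = key[OF G comm add sc hom]
  have dz: "\<phi> (dl c) 0 = 0" if c: "c \<in> G" for c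
  proof (cases "c = 0")
    case True
    have "-a0 \<in> G" using G a0 by auto
    from K[OF this a0(1)] have "(2*a0) * \<phi> (dl 0) 0 = 0" by simp
    then show ?thesis using True a0 by simp
  next
    case False
    from K[OF G0 c] False show ?thesis by simp
  qed
  have gen: "\<forall>x. supp x = S \<longrightarrow> S \<subseteq> G \<longrightarrow> \<phi> x 0 = 0" if "finite S" for S
    using that
  proof (induction S rule: finite_induct)
    case empty
    show ?case
    proof (intro allI impI)
      fix x :: "complex \<Rightarrow> complex" assume "supp x = {}"
      then have x: "x = (\<lambda>c. 0 * dl 0 c)" by (auto simp: supp_def fun_eq_iff)
      have "\<phi> (\<lambda>c. 0 * dl 0 c) = (\<lambda>c. 0 * \<phi> (dl 0) c)" by (rule sc[rule_format, OF dl_Vsp[OF G0]])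
      then have "\<phi> (\<lambda>c. 0 * dl 0 c) 0 = 0" by simp
      then show "\<phi> x 0 = 0" by (simp only: x)
    qed
  next
    case (insert b S)
    show ?case
    proof (intro allI impI)
      fix x :: "complex \<Rightarrow> complex" assume sx: "supp x = insert b S" and sG: "insert b S \<subseteq> G"
      define x' where "x' = x(b := 0)"
      have sx': "supp x' = S" using sx insert(2) by (auto simp: supp_def x'_def)
      have x'V: "x' \<in> Vsp G" using sx' sG insert(1) by (auto simp: Vsp_def)
      have bG: "b \<in> G" using sG by auto
      have x: "x = (\<lambda>c. x' c + (\<lambda>c. x b * dl b c) c)"
        by (auto simp: x'_def dl_def fun_eq_iff)
      have "\<phi> x 0 = \<phi> x' 0 + x b * \<phi> (dl b) 0"
        by (subst x, subst add[rule_format, OF x'V scal_Vsp[OF bG]], simp add: sc dl_Vsp[OF bG])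
      then show "\<phi> x 0 = 0" using insert.IH sx' sG dz[OF bG] by simp
    qed
  qed
  have "dl 0 \<in> \<phi> ` Vsp G" using bij dl_Vsp[OF G0] by (simp add: bij_betw_def)
  then obtain x where x: "x \<in> Vsp G" "dl 0 = \<phi> x" by (rule imageE)
  have fs: "finite (supp x)" "supp x \<subseteq> G" using x(1) unfolding Vsp_def by auto
  have "\<phi> x 0 = 0" using gen[OF fs(1)] fs(2) by blast
  moreover have "\<phi> x 0 = 1" unfolding x(2)[symmetric] by (simp add: dl_def)
  ultimately show False by simp
qed

end
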